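(* Let $A$ be a finite set, $\bot,\dagger\notin A$ distinct extra symbols, $N\geq1$, and let $\mathsf L$, $p_x=p(-|x)$, $\pi$, $T(\bot)$ and the generalized metric space $\mathcal M$ be as in the context. Then for every $t>0$, $$\operatorname{Mag}(t\mathcal M)=(t-1)\sum_{x\in\mathsf L\setminus T(\bot)}H_t(p_x)+\#T(\bot),$$ where $H_t(p)=\frac{1}{t-1}\bigl(1-\sum_i p_i^t\bigr)$ is the Tsallis $t$-entropy (for $t=1$, $H_1$ is the Shannon entropy, so the first term vanishes).
   Context: $A^*$ is the set of finite strings over $A$, $|x|$ denotes length (with $\bot,\dagger$ counted). $\mathsf L=\{\bot a : a\in A^*,\ |a|\leq N-1\}\sqcup\{\bot a\dagger : a\in A^*,\ |a|<N-1\}$, partially ordered by the prefix relation ($x\leq y$ iff $y=xa'$ for some string $a'$). Strings $\bot a$ are unfinished texts, $\bot a\dagger$ finished texts. For each unfinished text $x\in\mathsf L$ with $|x|\leq N-1$ a probability mass function $p_x=p(-|x)$ on $A\cup\{\dagger\}$ is given. Define $\pi(y|x)=1$ if $x=y$; $0$ if $x\not\leq y$; and if $x=\bot a_1\cdots a_t$ is a proper prefix of $y=xa_{t+1}\cdots a_{t+k}$, $\pi(y|x)=\prod_{i=1}^k p(a_{t+i}\mid\bot a_1\cdots a_{t+i-1})$. $T(\bot)$ is the set of elements of $\mathsf L$ that are either unfinished texts of length $N$ or finished texts (so $\mathsf L\setminus T(\bot)$ is the set of unfinished texts of length $\leq N-1$). $\mathcal M$ is the generalized metric space with point set $\mathsf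 L$ and $d(x,y)=-\ln\pi(y|x)\in[0,\infty]$. For $t>0$, $t\mathcal M$ has distances $t\,d$, and its magnitude is $\operatorname{Mag}(t\mathcal M)=\sum_{x,y\in\mathsf L}\zeta_t^{-1}(x,y)$, where $\zeta_t$ is the (invertible) matrix $\zeta_t(x,y)=e^{-t d(x,y)}=\pi(y|x)^t$ with $e^{-\infty}=0$. *)

theory Defs
  imports Complex_Main "HOL-Library.Extended_Real" "HOL-Library.Sublist"
begin

text \<open>Symbols: the start symbol (bot), letters from the alphabet, and the end symbol (dagger).
  Bot and Dag are distinct and not letters by construction.\<close>
datatype 'a sym = Bot | Sym 'a | Dag

text \<open>The poset L of texts (as lists of symbols, length counts Bot and Dag).\<close>
definition unfinished_texts :: "'a set \<Rightarrow> nat \<Rightarrow> 'a sym list set" where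
  "unfinished_texts A N = {Bot # map Sym a | a. a \<in> lists A \<and> length a \<le> N - 1}"

definition finished_texts :: "'a set \<Rightarrow> nat \<Rightarrow> 'a sym list set" where
  "finished_texts A N = {Bot # map Sym a @ [Dag] | a. a \<in> lists A \<and> length a < N - 1}"

definition texts :: "'a set \<Rightarrow> nat \<Rightarrow> 'a sym list set" where
  "texts A N = unfinished_texts A N \<union> finished_texts A N"

definition Tbot :: "'a set \<Rightarrow> nat \<Rightarrow> 'a sym list set" where
  "Tbot A N = {x \<in> unfinished_texts A N. length x = N} \<union> finished_texts A N"

text \<open>Transition probabilities pi(y|x), with p x s = p(s|x). Argument order: piT p y x = pi(y|x).\<close>
definition piT :: "('a sym list \<Rightarrow> 'a sym \<Rightarrow> real) \<Rightarrow> 'a sym list \<Rightarrow> 'a sym list \<Rightarrow> real" where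
  "piT p y x = (if x = y then 1
     else if \<not> prefix x y then 0
     else (\<Prod>i\<in>{length x..<length y}. p (take i y) (y ! i)))"

definition dist_text :: "('a sym list \<Rightarrow> 'a sym \<Rightarrow> real) \<Rightarrow> 'a sym list \<Rightarrow> 'a sym list \<Rightarrow> ereal" where
  "dist_text p x y = (if piT p y x = 0 then \<infinity> else ereal (- ln (piT p y x)))"

definition zeta_t :: "('a sym list \<Rightarrow> 'a sym \<Rightarrow> real) \<Rightarrow> real \<Rightarrow> 'a sym list \<Rightarrow> 'a sym list \<Rightarrow> real" where
  "zeta_t p t x y = (if dist_text p x y = \<infinity> then 0 else exp (- t * real_of_ereal (dist_text p x y)))"

text \<open>Matrices indexed by a finite set S, as functions; M is a two-sided inverse of Z on S
  (and vanishes off S, to make it unique).\<close>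
definition inverse_on :: "'b set \<Rightarrow> ('b \<Rightarrow> 'b \<Rightarrow> real) \<Rightarrow> ('b \<Rightarrow> 'b \<Rightarrow> real) \<Rightarrow> bool" where
  "inverse_on S Z M \<longleftrightarrow>
     (\<forall>x\<in>S. \<forall>z\<in>S. (\<Sum>y\<in>S. Z x y * M y z) = (if x = z then 1 else 0)
                 \<and> (\<Sum>y\<in>S. M x y * Z y z) = (if x = z then 1 else 0))
     \<and> (\<forall>x y. x \<notin> S \<or> y \<notin> S \<longrightarrow> M x y = 0)"

definition mat_inverse_on :: "'b set \<Rightarrow> ('b \<Rightarrow> 'b \<Rightarrow> real) \<Rightarrow> 'b \<Rightarrow> 'b \<Rightarrow> real" where
  "mat_inverse_on S Z = (THE M. inverse_on S Z M)"

definition magnitude :: "'b set \<Rightarrow> ('b \<Rightarrow> 'b \<Rightarrow> real) \<Rightarrow> real" where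
  "magnitude S Z = (\<Sum>x\<in>S. \<Sum>y\<in>S. mat_inverse_on S Z x y)"

definition tsallis :: "real \<Rightarrow> 'b set \<Rightarrow> ('b \<Rightarrow> real) \<Rightarrow> real" where
  "tsallis t S q = (if t = 1 then - (\<Sum>i\<in>S. q i * ln (q i))
                    else (1 - (\<Sum>i\<in>S. q i powr t)) / (t - 1))"

end

theory Submission
  imports Defs
begin

lemma texts_cases:
  assumes "z \<in> texts A N"
  obtains a where "set a \<subseteq> A" "z = Bot # map Sym a" "length a \<le> N - 1"
  | a where "set a \<subseteq> A" "z = Bot # map Sym a @ [Dag]" "length a < N - 1"
  using assms unfolding texts_def unfinished_texts_def finished_texts_def lists_eq_set by blast

lemma texts_ne: "z \<in> texts A N \<Longrightarrow> z \<noteq> []"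
  by (erule texts_cases) auto

lemma take_unf:
  assumes "z \<in> texts A N" "1 \<le> i" "i < length z"
  shows "take i z \<in> unfinished_texts A N \<and> length (take i z) \<le> N - 1 \<and> z ! i \<in> Sym ` A \<union> {Dag}"
proof -
  obtain j where j: "i = Suc j" using assms(2) by (cases i) auto
  show ?thesis
  using assms(1)
  proof (cases rule: texts_cases)
    case (1 a)
    have jl: "j < length a" using 1 j assms(3) by simp
    have tk: "take i z = Bot # map Sym (take j a)" using 1 j by (simp add: take_map)
    have st: "set (take j a) \<subseteq> A" using 1 by (meson order_trans set_take_subset)
    have ln: "length (take j a) \<le> N - 1" using 1 by simp
    have u: "take i z \<in> unfinished_texts A N"
      unfolding unfinished_texts_def lists_eq_set using tk st ln by blast
    have l: "length (take i z) \<le> N - 1" using tk 1 jl by simp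
    have "a ! j \<in> A" using 1 jl nth_mem by blast
    moreover have "z ! i = Sym (a ! j)" using 1 j jl by simp
    ultimately have zi: "z ! i \<in> Sym ` A \<union> {Dag}" by simp
    show ?thesis using u l zi by blast
  next
    case (2 a)
    have jl: "j \<le> length a" using 2 j assms(3) by simp
    have tk: "take i z = Bot # map Sym (take j a)" using 2 j jl by (simp add: take_map)
    have st: "set (take j a) \<subseteq> A" using 2 by (meson order_trans set_take_subset)
    have ln: "length (take j a) \<le> N - 1" using 2 by simp
    have u: "take i z \<in> unfinished_texts A N"
      unfolding unfinished_texts_def lists_eq_set using tk st ln by blast
    have l: "length (take i z) \<le> N - 1" using tk 2 jl by simp
    have zi: "z ! i \<in> Sym ` A \<union> {Dag}"
    proof (cases "j < length a")
      case True
      then have "a ! j \<in> A" using 2 nth_mem by blast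
      moreover have "z ! i = Sym (a ! j)" using 2 j True by (simp add: nth_append)
      ultimately show ?thesis by simp
    next
      case False then have "j = length a" using jl by simp
      then have "z ! i = Dag" using 2 j by (simp add: nth_append)
      then show ?thesis by simp
    qed
    show ?thesis using u l zi by blast
  qed
qed

lemma take_S:
  assumes "z \<in> texts A N" "1 \<le> i" "i \<le> length z"
  shows "take i z \<in> texts A N"
proof (cases "i = length z")
  case True then show ?thesis using assms by simp
next
  case False then show ?thesis using take_unf[OF assms(1,2)] assms(3) unfolding texts_def by auto
qed

lemma unf_not_fin:
  assumes "x \<in> unfinished_texts A N"
  shows "x \<notin> finished_texts A N"
proof
  assume f: "x \<in> finished_texts A N"
  obtain a where a: "x = Bot # map Sym a"
    using assms unfolding unfinished_texts_def by auto
  obtain b where b: "x = Bot # map Sym b @ [Dag]"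
    using f unfolding finished_texts_def by auto
  have "Dag \<in> set x" using b by simp
  moreover have "Dag \<notin> set x" using a by auto
  ultimately show False by blast
qed

lemma child_S:
  assumes "x \<in> texts A N" "x \<notin> Tbot A N" "s \<in> Sym ` A \<union> {Dag}" "N \<ge> 1"
  shows "x @ [s] \<in> texts A N"
proof -
  have "x \<in> unfinished_texts A N" "length x \<noteq> N" using assms unfolding texts_def Tbot_def by auto
  then obtain a where a0: "set a \<subseteq> A" "x = Bot # map Sym a" "length a \<le> N - 1"
    unfolding unfinished_texts_def lists_eq_set by blast
  then have a: "set a \<subseteq> A" "x = Bot # map Sym a" "length a < N - 1"
    using \<open>length x \<noteq> N\<close> assms(4) by auto
  show ?thesis
  proof (cases "s = Dag")
    case True then show ?thesis using a unfolding texts_def finished_texts_def lists_eq_set by auto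
  next
    case False then obtain b where "s = Sym b" "b \<in> A" using assms(3) by auto
    then have "x @ [s] = Bot # map Sym (a @ [b])" "set (a @ [b]) \<subseteq> A" "length (a @ [b]) \<le> N - 1"
      using a by auto
    then show ?thesis unfolding texts_def unfinished_texts_def lists_eq_set by blast
  qed
qed

lemma child_S_rev:
  assumes "x \<in> texts A N" "x @ [s] \<in> texts A N" "N \<ge> 1"
  shows "x \<notin> Tbot A N \<and> s \<in> Sym ` A \<union> {Dag}"
proof -
  have "1 \<le> length x" using texts_ne[OF assms(1)] by (cases x) auto
  from take_unf[OF assms(2) this] have
    "x \<in> unfinished_texts A N" "length x \<le> N - 1" "s \<in> Sym ` A \<union> {Dag}" by auto
  then show ?thesis using unf_not_fin[of x A N] assms(3) unfolding Tbot_def by auto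
qed

lemma children:
  assumes "x \<in> texts A N" "N \<ge> 1"
  shows "{y \<in> texts A N. butlast y = x} = (if x \<in> Tbot A N then {} else (\<lambda>s. x @ [s]) ` (Sym ` A \<union> {Dag}))"
proof -
  have yx: "y = x @ [last y]" if "y \<in> texts A N" "butlast y = x" for y
    using append_butlast_last_id[OF texts_ne[OF that(1)]] that(2) by simp
  show ?thesis
  proof (cases "x \<in> Tbot A N")
    case True
    have "y \<notin> texts A N \<or> butlast y \<noteq> x" for y
    proof (rule ccontr)
      assume "\<not> (y \<notin> texts A N \<or> butlast y \<noteq> x)"
      then have y: "y \<in> texts A N" "butlast y = x" by auto
      have "x @ [last y] \<in> texts A N" using y yx[OF y] by simp
      then show False using child_S_rev[OF assms(1) _ assms(2)] True by blast
    qed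
    then show ?thesis using True by auto
  next
    case False
    have sub1: "{y \<in> texts A N. butlast y = x} \<subseteq> (\<lambda>s. x @ [s]) ` (Sym ` A \<union> {Dag})"
    proof
      fix y assume "y \<in> {y \<in> texts A N. butlast y = x}"
      then have y: "y \<in> texts A N" "butlast y = x" by auto
      have e: "y = x @ [last y]" by (rule yx[OF y])
      then have "x @ [last y] \<in> texts A N" using y(1) by simp
      then have "last y \<in> Sym ` A \<union> {Dag}" using child_S_rev[OF assms(1) _ assms(2)] by blast
      then show "y \<in> (\<lambda>s. x @ [s]) ` (Sym ` A \<union> {Dag})" using e by (rule rev_image_eqI)
    qed
    have sub2: "(\<lambda>s. x @ [s]) ` (Sym ` A \<union> {Dag}) \<subseteq> {y \<in> texts A N. butlast y = x}"
    proof
      fix y assume "y \<in> (\<lambda>s. x @ [s]) ` (Sym ` A \<union> {Dag})"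
      then obtain s where s: "s \<in> Sym ` A \<union> {Dag}" "y = x @ [s]" by blast
      have "x @ [s] \<in> texts A N" by (rule child_S[OF assms(1) False s(1) assms(2)])
      then show "y \<in> {y \<in> texts A N. butlast y = x}" using s(2) by simp
    qed
    have eq: "{y \<in> texts A N. butlast y = x} = (\<lambda>s. x @ [s]) ` (Sym ` A \<union> {Dag})"
      by (rule subset_antisym[OF sub1 sub2])
    show ?thesis using False eq by (simp only: if_False)
  qed
qed

lemma finite_texts: "finite A \<Longrightarrow> finite (texts A N)"
proof -
  assume f: "finite A"
  let ?L = "{xs. set xs \<subseteq> A \<and> length xs \<le> N}"
  have fL: "finite ?L" by (rule finite_lists_length_le[OF f])
  have s1: "unfinished_texts A N \<subseteq> (\<lambda>a. Bot # map Sym a) ` ?L"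
  proof
    fix x assume "x \<in> unfinished_texts A N"
    then obtain a where "x = Bot # map Sym a" "set a \<subseteq> A" "length a \<le> N - 1"
      unfolding unfinished_texts_def lists_eq_set by blast
    then show "x \<in> (\<lambda>a. Bot # map Sym a) ` ?L" by auto
  qed
  have s2: "finished_texts A N \<subseteq> (\<lambda>a. Bot # map Sym a @ [Dag]) ` ?L"
  proof
    fix x assume "x \<in> finished_texts A N"
    then obtain a where "x = Bot # map Sym a @ [Dag]" "set a \<subseteq> A" "length a < N - 1"
      unfolding finished_texts_def lists_eq_set by blast
    then show "x \<in> (\<lambda>a. Bot # map Sym a @ [Dag]) ` ?L" by auto
  qed
  have "texts A N \<subseteq> (\<lambda>a. Bot # map Sym a) ` ?L \<union> (\<lambda>a. Bot # map Sym a @ [Dag]) ` ?L"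
    unfolding texts_def using s1 s2 by blast
  moreover have "finite ((\<lambda>a. Bot # map Sym a) ` ?L \<union> (\<lambda>a. Bot # map Sym a @ [Dag]) ` ?L)"
    using fL by simp
  ultimately show ?thesis by (rule finite_subset)
qed

lemma butlast_neq: "y \<noteq> [] \<Longrightarrow> butlast y \<noteq> y"
  by (metis append_butlast_last_id append_self_conv list.distinct(1))

lemma piT_self: "piT p x x = 1" by (simp add: piT_def)

lemma piT_nonpre: "\<not> prefix x y \<Longrightarrow> piT p y x = 0" by (auto simp add: piT_def)

lemma piT_snoc: "piT p (x @ [s]) x = p x s" by (simp add: piT_def)

lemma piT_trans:
  assumes "prefix x y" "prefix y z"
  shows "piT p z x = piT p y x * piT p z y"
proof (cases "x = y \<or> y = z")
  case True then show ?thesis by (auto simp: piT_self)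
next
  case False
  then have xz: "x \<noteq> z" using assms by auto
  have pxz: "prefix x z" using assms by auto
  obtain zs where zs: "z = y @ zs" using assms(2) prefixE by blast
  have l1: "length x \<le> length y" "length y \<le> length z" using assms prefix_length_le by auto
  have "piT p z x = (\<Prod>i\<in>{length x..<length z}. p (take i z) (z ! i))"
    using xz pxz by (simp add: piT_def)
  also have "\<dots> = (\<Prod>i\<in>{length x..<length y}. p (take i z) (z ! i)) * (\<Prod>i\<in>{length y..<length z}. p (take i z) (z ! i))"
    using l1 by (simp add: prod.atLeastLessThan_concat)
  also have "(\<Prod>i\<in>{length x..<length y}. p (take i z) (z ! i)) = (\<Prod>i\<in>{length x..<length y}. p (take i y) (y ! i))"
    by (rule prod.cong) (auto simp: zs nth_append)
  finally show ?thesis using False assms by (simp add: piT_def)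
qed

lemma piT_nonneg:
  assumes "x \<in> texts A N" "z \<in> texts A N"
    and "\<And>x s. x \<in> unfinished_texts A N \<Longrightarrow> length x \<le> N - 1 \<Longrightarrow>
                 s \<in> Sym ` A \<union> {Dag} \<Longrightarrow> p x s \<ge> 0"
  shows "0 \<le> piT p z x"
proof -
  have "1 \<le> length x" using texts_ne[OF assms(1)] by (cases x) auto
  then have "\<forall>i\<in>{length x..<length z}. 0 \<le> p (take i z) (z ! i)"
    using take_unf[OF assms(2)] assms(3) by auto
  then show ?thesis unfolding piT_def by (auto intro: prod_nonneg)
qed

lemma zeta_eq:
  assumes "0 \<le> piT p y x"
  shows "zeta_t p t x y = piT p y x powr t"
proof (cases "piT p y x = 0")
  case True then show ?thesis by (simp add: zeta_t_def dist_text_def)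
next
  case False
  then have pos: "0 < piT p y x" using assms by simp
  have "zeta_t p t x y = exp (- t * (- ln (piT p y x)))"
    unfolding zeta_t_def dist_text_def using False by simp
  also have "\<dots> = exp (t * ln (piT p y x))" by simp
  also have "\<dots> = piT p y x powr t" using pos by (simp add: powr_def)
  finally show ?thesis .
qed

lemma zeta_self: "zeta_t p t x x = 1"
  by (simp add: zeta_t_def dist_text_def piT_self)

lemma zeta_nonpre: "\<not> prefix x y \<Longrightarrow> zeta_t p t x y = 0"
  by (simp add: zeta_t_def dist_text_def piT_nonpre)

lemma inv_unique:
  assumes "finite S" "inverse_on S Z M1" "inverse_on S Z M2"
  shows "M1 = M2"
proof (intro ext)
  fix x z
  show "M1 x z = M2 x z"
  proof (cases "x \<in> S \<and> z \<in> S")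
    case False then show ?thesis using assms unfolding inverse_on_def by auto
  next
    case True
    have "(\<Sum>y\<in>S. M1 x y * (if y = z then 1 else 0)) = (\<Sum>y\<in>S. if y = z then M1 x y else 0)"
      by (intro sum.cong) auto
    then have "M1 x z = (\<Sum>y\<in>S. M1 x y * (if y = z then 1 else 0))"
      using True assms(1) by (simp add: sum.delta)
    also have "\<dots> = (\<Sum>y\<in>S. M1 x y * (\<Sum>w\<in>S. Z y w * M2 w z))"
      using True assms(3) unfolding inverse_on_def by (intro sum.cong) auto
    also have "\<dots> = (\<Sum>y\<in>S. \<Sum>w\<in>S. M1 x y * Z y w * M2 w z)"
      by (simp add: sum_distrib_left mult.assoc)
    also have "\<dots> = (\<Sum>w\<in>S. \<Sum>y\<in>S. M1 x y * Z y w * M2 w z)"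
      by (rule sum.swap)
    also have "\<dots> = (\<Sum>w\<in>S. (\<Sum>y\<in>S. M1 x y * Z y w) * M2 w z)"
      by (simp add: sum_distrib_right)
    also have "\<dots> = (\<Sum>w\<in>S. (if x = w then 1 else 0) * M2 w z)"
      using True assms(2) unfolding inverse_on_def by (intro sum.cong) auto
    also have "\<dots> = (\<Sum>w\<in>S. if x = w then M2 w z else 0)"
      by (intro sum.cong) auto
    also have "\<dots> = M2 x z" using True assms(1) by (simp add: sum.delta')
    finally show ?thesis .
  qed
qed


lemma prefix_take_self: "prefix x z \<Longrightarrow> take (length x) z = x"
  by (metis append_eq_conv_conj prefixE)

theorem proposition3p9:
  fixes A :: "'a set" and N :: nat and p :: "'a sym list \<Rightarrow> 'a sym \<Rightarrow> real" and t :: real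
  assumes "finite A"
    and "N \<ge> 1"
    and "\<And>x s. x \<in> unfinished_texts A N \<Longrightarrow> length x \<le> N - 1 \<Longrightarrow>
                 s \<in> Sym ` A \<union> {Dag} \<Longrightarrow> p x s \<ge> 0"
    and "\<And>x. x \<in> unfinished_texts A N \<Longrightarrow> length x \<le> N - 1 \<Longrightarrow>
               (\<Sum>s\<in>Sym ` A \<union> {Dag}. p x s) = 1"
    and "t > 0"
  shows "magnitude (texts A N) (zeta_t p t) =
           (t - 1) * (\<Sum>x\<in>texts A N - Tbot A N. tsallis t (Sym ` A \<union> {Dag}) (p x))
           + real (card (Tbot A N))"
proof -
  let ?S = "texts A N"
  let ?B = "Sym ` A \<union> {Dag}"
  define Z where "Z = zeta_t p t"
  have fin: "finite ?S" using finite_texts[OF assms(1)] .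
  have pnn: "0 \<le> piT p z x" if "x \<in> ?S" "z \<in> ?S" for x z
    by (rule piT_nonneg[OF that assms(3)])
  have Zpi: "Z x z = piT p z x powr t" if "x \<in> ?S" "z \<in> ?S" for x z
    unfolding Z_def by (rule zeta_eq[OF pnn[OF that]])
  have Z1: "Z x x = 1" for x unfolding Z_def by (rule zeta_self)
  have Z0: "Z x z = 0" if "\<not> prefix x z" for x z unfolding Z_def by (rule zeta_nonpre[OF that])
  have Ztr: "Z x z = Z x y * Z y z"
    if "x \<in> ?S" "y \<in> ?S" "z \<in> ?S" "prefix x y" "prefix y z" for x y z
    using Zpi[OF that(1,3)] Zpi[OF that(1,2)] Zpi[OF that(2,3)] piT_trans[OF that(4,5), of p]
      pnn[OF that(1,2)] pnn[OF that(2,3)] by (simp add: powr_mult)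
  have len1: "1 \<le> length x" if "x \<in> ?S" for x
    using texts_ne[OF that] by (cases x) auto
  define M where "M x y = (if x \<in> ?S \<and> y \<in> ?S then (if x = y then 1 else if butlast y = x then - Z x y else 0) else 0)" for x y
  have Mrow: "M x y = (if y = x then 1 else 0) - (if butlast y = x then Z x y else 0)"
    if "x \<in> ?S" "y \<in> ?S" for x y
    using that butlast_neq[OF texts_ne[OF that(2)]] unfolding M_def by auto
  have ZM: "(\<Sum>y\<in>?S. Z x y * M y z) = (if x = z then 1 else 0)" if xS: "x \<in> ?S" and zS: "z \<in> ?S" for x z
  proof -
    let ?bz = "butlast z"
    have "(\<Sum>y\<in>?S. Z x y * M y z) = (\<Sum>y\<in>?S. (if y = z then Z x y else 0) - (if y = ?bz then Z x y * Z y z else 0))"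
    proof (intro sum.cong refl)
      fix y assume yS: "y \<in> ?S"
      have ne: "?bz \<noteq> z" using butlast_neq[OF texts_ne[OF zS]] .
      show "Z x y * M y z = (if y = z then Z x y else 0) - (if y = ?bz then Z x y * Z y z else 0)"
        unfolding Mrow[OF yS zS] using ne by (cases "y = z"; cases "y = ?bz") auto
    qed
    also have "\<dots> = Z x z - (if ?bz \<in> ?S then Z x ?bz * Z ?bz z else 0)"
      using fin zS by (simp add: sum_subtractf sum.delta)
    also have "\<dots> = (if x = z then 1 else 0)"
    proof (cases "prefix x z")
      case True
      show ?thesis
      proof (cases "x = z")
        case True
        have "length ?bz < length z" using texts_ne[OF zS] by simp
        have "\<not> prefix x ?bz"
        proof
          assume "prefix x ?bz"
          then have "length x \<le> length ?bz" by (rule prefix_length_le)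
          moreover have "length ?bz < length x" using \<open>length ?bz < length z\<close> True by simp
          ultimately show False by linarith
        qed
        then show ?thesis using True Z1 Z0 by simp
      next
        case False
        have bz: "?bz = take (length z - 1) z" by (simp add: butlast_conv_take)
        have lx: "length x < length z" using \<open>prefix x z\<close> False
          by (intro prefix_length_less strict_prefixI) auto
        have bzS: "?bz \<in> ?S" using bz take_S[OF zS, of "length z - 1"] len1[OF xS] lx by simp
        have zeq: "z = ?bz @ [last z]" using texts_ne[OF zS] by simp
        have "prefix x (?bz @ [last z])" using \<open>prefix x z\<close> by (simp only: zeq[symmetric])
        then have "x = ?bz @ [last z] \<or> prefix x ?bz" by (simp only: prefix_snoc)
        moreover have "x \<noteq> ?bz @ [last z]" by (subst zeq[symmetric]) (rule False)
        ultimately have "prefix x ?bz" by blast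
        moreover have "prefix ?bz z" by (rule prefixeq_butlast)
        ultimately show ?thesis using Ztr[OF xS bzS zS] bzS False by simp
      qed
    next
      case False
      have "\<not> prefix x ?bz"
      proof
        assume "prefix x ?bz"
        then have "prefix x z" using prefixeq_butlast[of z] by (rule prefix_order.order_trans)
        then show False using False by simp
      qed
      then show ?thesis using False Z0 by auto
    qed
    finally show ?thesis .
  qed
  have MZ: "(\<Sum>y\<in>?S. M x y * Z y z) = (if x = z then 1 else 0)" if xS: "x \<in> ?S" and zS: "z \<in> ?S" for x z
  proof -
    have "(\<Sum>y\<in>?S. M x y * Z y z) = (\<Sum>y\<in>?S. (if y = x then Z y z else 0) - (if butlast y = x then Z x y * Z y z else 0))"
    proof (intro sum.cong refl)
      fix y assume yS: "y \<in> ?S"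
      show "M x y * Z y z = (if y = x then Z y z else 0) - (if butlast y = x then Z x y * Z y z else 0)"
        unfolding Mrow[OF xS yS] using butlast_neq[OF texts_ne[OF yS]] by (cases "y = x"; cases "butlast y = x") auto
    qed
    also have "\<dots> = Z x z - (\<Sum>y\<in>?S. if butlast y = x then Z x y * Z y z else 0)"
      using fin xS by (simp add: sum_subtractf sum.delta)
    also have "\<dots> = (if x = z then 1 else 0)"
    proof (cases "prefix x z \<and> x \<noteq> z")
      case True
      define c where "c = take (length x + 1) z"
      have lx: "length x < length z" using True
        by (intro prefix_length_less strict_prefixI) auto
      have cS: "c \<in> ?S" unfolding c_def using take_S[OF zS] lx by simp
      have tx: "take (length x) z = x" using True prefix_take_self by blast
      have bc: "butlast c = x" unfolding c_def using tx lx
        by (simp add: butlast_take min_def)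
      have "take (length x) c = x" unfolding c_def using tx by simp
      then have pxc: "prefix x c" using take_is_prefix[of "length x" c] by simp
      have pcz: "prefix c z" unfolding c_def by (rule take_is_prefix)
      have "(\<Sum>y\<in>?S. if butlast y = x then Z x y * Z y z else 0) = (\<Sum>y\<in>?S. if y = c then Z x c * Z c z else 0)"
      proof (intro sum.cong refl)
        fix y assume yS: "y \<in> ?S"
        show "(if butlast y = x then Z x y * Z y z else 0) = (if y = c then Z x c * Z c z else 0)"
        proof (cases "y = c")
          case True then show ?thesis using bc by simp
        next
          case False
          show ?thesis
          proof (cases "butlast y = x")
            case True
            have ly: "length y = length x + 1" using True texts_ne[OF yS] by auto
            have "\<not> prefix y z"
            proof
              assume "prefix y z"
              then have "take (length y) z = y" by (rule prefix_take_self)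
              then show False using ly False c_def by simp
            qed
            then show ?thesis using Z0 False by simp
          qed (use False in simp)
        qed
      qed
      also have "\<dots> = Z x z" using fin cS Ztr[OF xS cS zS pxc pcz] by (simp add: sum.delta)
      finally show ?thesis using True by simp
    next
      case False
      have "(\<Sum>y\<in>?S. if butlast y = x then Z x y * Z y z else 0) = 0"
      proof (intro sum.neutral ballI)
        fix y assume yS: "y \<in> ?S"
        show "(if butlast y = x then Z x y * Z y z else 0) = 0"
        proof (cases "butlast y = x")
          case True
          have "\<not> prefix y z"
          proof
            assume pyz: "prefix y z"
            have "prefix x y" using True prefixeq_butlast[of y] by simp
            then have "prefix x z" using pyz by auto
            moreover have "length x < length y" using True texts_ne[OF yS] by auto
            then have "x \<noteq> z" using prefix_length_le[OF pyz] by auto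
            ultimately show False using False by blast
          qed
          then show ?thesis using Z0 True by simp
        qed simp
      qed
      then show ?thesis using False Z0 Z1 by auto
    qed
    finally show ?thesis .
  qed
  have Moff: "M x y = 0" if "x \<notin> ?S \<or> y \<notin> ?S" for x y
    using that unfolding M_def by auto
  have inv: "inverse_on ?S Z M"
    unfolding inverse_on_def using ZM MZ Moff by blast
  have mat: "mat_inverse_on ?S Z = M"
    unfolding mat_inverse_on_def
    by (rule the_equality[where P = "inverse_on ?S Z"]) (rule inv, rule inv_unique[OF fin _ inv])
  have rows: "(\<Sum>y\<in>?S. M x y) = (if x \<in> Tbot A N then 1 else 1 - (\<Sum>s\<in>?B. p x s powr t))"
    if xS: "x \<in> ?S" for x
  proof -
    have "(\<Sum>y\<in>?S. M x y) = (\<Sum>y\<in>?S. (if y = x then 1 else 0) - (if butlast y = x then Z x y else 0))"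
    proof (intro sum.cong refl)
      fix y assume yS: "y \<in> ?S"
      show "M x y = (if y = x then 1 else 0) - (if butlast y = x then Z x y else 0)"
        by (rule Mrow[OF xS yS])
    qed
    also have "\<dots> = 1 - (\<Sum>y\<in>?S. if butlast y = x then Z x y else 0)"
      using fin xS by (simp add: sum_subtractf sum.delta)
    also have "(\<Sum>y\<in>?S. if butlast y = x then Z x y else 0) = (\<Sum>y\<in>{y\<in>?S. butlast y = x}. Z x y)"
      using fin by (simp add: sum.inter_filter)
    also have "\<dots> = (if x \<in> Tbot A N then 0 else (\<Sum>s\<in>?B. p x s powr t))"
    proof (cases "x \<in> Tbot A N")
      case True then show ?thesis unfolding children[OF xS assms(2)] by simp
    next
      case False
      have "(\<Sum>y\<in>{y\<in>?S. butlast y = x}. Z x y) = (\<Sum>y\<in>(\<lambda>s. x @ [s]) ` ?B. Z x y)"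
        using children[OF xS assms(2)] False by simp
      also have "\<dots> = (\<Sum>s\<in>?B. Z x (x @ [s]))"
        by (rule sum.reindex_cong[where l = "\<lambda>s. x @ [s]"]) (auto simp: inj_on_def)
      also have "\<dots> = (\<Sum>s\<in>?B. p x s powr t)"
        using Zpi[OF xS child_S[OF xS False _ assms(2)]] by (simp add: piT_snoc)
      finally show ?thesis using False by simp
    qed
    finally show ?thesis by simp
  qed
  have TS: "Tbot A N \<subseteq> ?S" unfolding Tbot_def texts_def by auto
  define g where "g x = (if x \<in> Tbot A N then 1 else 1 - (\<Sum>s\<in>?B. p x s powr t))" for x
  have m1: "magnitude ?S (zeta_t p t) = sum g ?S"
    unfolding magnitude_def Z_def[symmetric] mat g_def using rows by (intro sum.cong) auto
  have m2: "sum g ?S = sum g (?S - Tbot A N) + sum g (Tbot A N)"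
    by (rule sum.subset_diff[OF TS fin])
  have m3: "sum g (Tbot A N) = (\<Sum>x\<in>Tbot A N. 1)"
    unfolding g_def by (intro sum.cong) auto
  have m4: "sum g (?S - Tbot A N) = (\<Sum>x\<in>?S - Tbot A N. (t - 1) * tsallis t ?B (p x))"
  proof (intro sum.cong refl)
    fix x assume x: "x \<in> ?S - Tbot A N"
    have gx: "g x = 1 - (\<Sum>s\<in>?B. p x s powr t)" using x unfolding g_def by simp
    have xu: "x \<in> unfinished_texts A N" "length x \<le> N - 1"
      using x assms(2) unfolding texts_def Tbot_def unfinished_texts_def by auto
    show "g x = (t - 1) * tsallis t ?B (p x)"
    proof (cases "t = 1")
      case True
      have "(\<Sum>s\<in>?B. p x s powr t) = (\<Sum>s\<in>?B. p x s)"
        using True assms(3)[OF xu] by (intro sum.cong) auto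
      then show ?thesis using True assms(4)[OF xu] gx by simp
    next
      case False then show ?thesis using gx by (simp add: tsallis_def)
    qed
  qed
  show ?thesis by (simp only: m1 m2 m3 m4 sum_constant sum_distrib_left mult_1_right)
qed

end
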